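(* For every integer $n\ge 1$ and $x\in\mathbb{R}$, $$E_{-n}^k(x)=E_n^k(-x)+\frac{k}{n+k}\,E_n^k(x).$$
   Context: Fix $k\ge 0$. Partial order on $\mathbb{Z}$: $j\triangleleft n$ iff either ($|j|<|n|$ and $|n|-|j|$ is a positive even integer) or ($|j|=|n|$ and $n<j$). Let $\delta_k(x)=|2\sin x|^{2k}$ and $(f,g)_k=\frac{1}{2\pi}\int_0^{2\pi} f(x)\overline{g(x)}\delta_k(x)\,dx$. The non-symmetric Heckman–Opdam polynomials $E_n^k$, $n\in\mathbb{Z}$, are the functions on $\mathbb{R}$ of the form $E_n^k(x)=e^{nx}+\sum_{j\triangleleft n}c_{n,j}e^{jx}$ (finite sum) such that $(E_n^k(i\,\cdot),e^{ij\,\cdot})_k=0$ for all $j\triangleleft n$. It is known that $T^kE_n^k=\tilde n E_n^k$ for the Cherednik operator $T^k f(x)=f'(x)+2k\frac{f(x)-f(-x)}{1-e^{-2x}}-kf(x)$, where $\tilde n=n+k$ if $n\ge0$ and $\tilde n=n-k$ if $n<0$. *)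

theory Defs
  imports "HOL-Analysis.Analysis"
begin

definition tri :: "int \<Rightarrow> int \<Rightarrow> bool" where
  "tri j n \<longleftrightarrow> (\<bar>j\<bar> < \<bar>n\<bar> \<and> even (\<bar>n\<bar> - \<bar>j\<bar>)) \<or> (\<bar>j\<bar> = \<bar>n\<bar> \<and> n < j)"

definition delta :: "real \<Rightarrow> real \<Rightarrow> real" where
  "delta k x = \<bar>2 * sin x\<bar> powr (2 * k)"

definition ip :: "real \<Rightarrow> (real \<Rightarrow> complex) \<Rightarrow> (real \<Rightarrow> complex) \<Rightarrow> complex" where
  "ip k f g = integral {0..2*pi} (\<lambda>x. f x * cnj (g x) * complex_of_real (delta k x)) / complex_of_real (2*pi)"

text \<open>Exponential polynomial e^{nz} + sum over j \<triangleleft> n of c_j e^{jz}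
  (the set of such j is finite, contained in [-|n|,|n|]).\<close>
definition expoly :: "(int \<Rightarrow> complex) \<Rightarrow> int \<Rightarrow> complex \<Rightarrow> complex" where
  "expoly c n z = exp (of_int n * z) +
     (\<Sum>j\<in>{j\<in>{-\<bar>n\<bar>..\<bar>n\<bar>}. tri j n}. c j * exp (of_int j * z))"

definition HO_coeffs :: "real \<Rightarrow> int \<Rightarrow> (int \<Rightarrow> complex) \<Rightarrow> bool" where
  "HO_coeffs k n c \<longleftrightarrow> (\<forall>j. \<not> tri j n \<longrightarrow> c j = 0) \<and>
     (\<forall>j. tri j n \<longrightarrow> ip k (\<lambda>t. expoly c n (\<i> * of_real t)) (\<lambda>t. exp (\<i> * of_int j * of_real t)) = 0)"

definition E :: "real \<Rightarrow> int \<Rightarrow> real \<Rightarrow> complex" where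
  "E k n x = expoly (THE c. HO_coeffs k n c) n (complex_of_real x)"

end

theory Submission imports Defs
begin

definition ex :: "int \<Rightarrow> real \<Rightarrow> complex" where
  "ex p t = exp (\<i> * of_int p * of_real t)"

definition dc :: "real \<Rightarrow> real \<Rightarrow> real" where
  "dc k t = (if k = 0 then 1 else delta k t)"

definition mom :: "real \<Rightarrow> int \<Rightarrow> complex" where
  "mom k p = integral {0..2*pi} (\<lambda>t. ex p t * of_real (delta k t))"

lemma ex_mult: "ex j t * ex m t = ex (j + m) t"
  by (simp add: ex_def exp_add[symmetric] algebra_simps)

lemma ex_cnj: "cnj (ex l t) = ex (-l) t"
  by (simp add: ex_def exp_cnj)

lemma cont_ex: "continuous_on S (ex p)"
  unfolding ex_def by (intro continuous_intros)

lemma sin_nz: "0 < t \<Longrightarrow> t < 2*pi \<Longrightarrow> t \<noteq> pi \<Longrightarrow> sin t \<noteq> 0"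
proof -
  assume a: "0 < t" "t < 2*pi" "t \<noteq> pi"
  show ?thesis
  proof (cases "t < pi")
    case True then show ?thesis using sin_gt_zero[of t] a by auto
  next
    case False
    then have "0 < t - pi" "t - pi < pi" using a by auto
    then have "0 < sin (t - pi)" by (rule sin_gt_zero)
    then show ?thesis by (simp add: sin_diff)
  qed
qed

lemma delta_dc: "sin t \<noteq> 0 \<Longrightarrow> delta k t = dc k t"
  by (simp add: dc_def delta_def)

lemma delta_nonneg: "delta k t \<ge> 0"
  by (simp add: delta_def)

lemma dc_pos: "sin t \<noteq> 0 \<Longrightarrow> dc k t > 0"
  by (simp add: dc_def delta_def)

lemma cont_dc: "k \<ge> 0 \<Longrightarrow> continuous_on S (dc k)"
proof (cases "k = 0")
  case True then show ?thesis by (simp add: dc_def)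
next
  case False
  assume "k \<ge> 0"
  then have "k > 0" using False by auto
  have "continuous_on S (\<lambda>t. \<bar>2 * sin t\<bar> powr (2 * k))"
    by (rule continuous_on_powr') (auto intro!: continuous_intros simp: \<open>k > 0\<close>)
  then show ?thesis using False by (simp add: dc_def delta_def[abs_def])
qed

definition Z :: "real set" where "Z = {0, pi, 2*pi}"

lemma Z_sin: "t \<in> {0..2*pi} - Z \<Longrightarrow> sin t \<noteq> 0"
  using sin_nz[of t] by (auto simp: Z_def)

lemma finite_Z: "finite Z" by (simp add: Z_def)

lemma integrable_ex_dc: "k \<ge> 0 \<Longrightarrow> (\<lambda>t. ex p t * of_real (dc k t)) integrable_on {0..2*pi}"
  by (intro integrable_continuous_interval continuous_intros cont_ex cont_dc)

lemma integrable_ex_delta: "k \<ge> 0 \<Longrightarrow> (\<lambda>t. ex p t * of_real (delta k t)) integrable_on {0..2*pi}"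
  apply (rule integrable_spike_finite[OF finite_Z _ integrable_ex_dc])
  using Z_sin delta_dc by auto

lemma mom_dc: "k \<ge> 0 \<Longrightarrow> mom k p = integral {0..2*pi} (\<lambda>t. ex p t * of_real (dc k t))"
  unfolding mom_def
  apply (rule integral_spike[OF negligible_finite[OF finite_Z]])
  using Z_sin delta_dc by auto

lemma ex_2pi: "ex m (2*pi) = 1"
proof -
  have "ex m (2*pi) = exp ((2 * of_int m * pi) * \<i>)" by (simp add: ex_def algebra_simps)
  also have "... = 1" by (rule exp_integer_2pi) auto
  finally show ?thesis .
qed

lemma ex_0: "ex m 0 = 1" by (simp add: ex_def)

lemma deriv_ex: "(ex m has_vector_derivative (\<i> * of_int m * ex m t)) (at t within S)"
proof -
  have "((\<lambda>z. exp (\<i> * of_int m * z)) has_field_derivative (\<i> * of_int m * exp (\<i> * of_int m * of_real t))) (at (of_real t))"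
    by (auto intro!: derivative_eq_intros)
  from has_vector_derivative_real_field[OF this] show ?thesis unfolding ex_def[abs_def] by simp
qed

lemma int_ex: "(ex m has_integral (if m = 0 then of_real (2*pi) else 0)) {0..2*pi}"
proof (cases "m = 0")
  case True
  then have "ex m = (\<lambda>t. 1)" by (auto simp: ex_def)
  then show ?thesis using True has_integral_const_real[of "1::complex" 0 "2*pi"] by (simp add: scaleR_conv_of_real)
next
  case False
  let ?f = "\<lambda>t. ex m t / (\<i> * of_int m)"
  have "((\<lambda>t. (\<i> * of_int m * ex m t) / (\<i> * of_int m)) has_integral (?f (2*pi) - ?f 0)) {0..2*pi}"
    apply (rule fundamental_theorem_of_calculus)
     apply simp
    apply (rule has_vector_derivative_divide)
    by (rule deriv_ex)
  then show ?thesis using False by (simp add: ex_2pi ex_0)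
qed

lemma delta_alt: "delta k t = (4 * (sin t)^2) powr k"
proof (cases "sin t = 0")
  case True then show ?thesis by (simp add: delta_def)
next
  case False
  have h: "\<bar>2 * sin t\<bar> powr 2 = 4 * (sin t)^2"
    by (simp add: power2_eq_square abs_mult_self_eq)
  have "delta k t = (\<bar>2 * sin t\<bar> powr 2) powr k"
    by (simp only: powr_powr delta_def)
  then show ?thesis using h by simp
qed

lemma deriv_G:
  assumes "sin t \<noteq> 0"
  shows "((\<lambda>t. sin t * delta k t) has_real_derivative ((2*k+1) * cos t * delta k t)) (at t)"
proof -
  have pos: "4 * (sin t)^2 > 0" using assms by simp
  have d: "((\<lambda>t. (4 * (sin t)^2) powr k) has_real_derivative
      ((4 * (sin t)^2) powr k * (0 * ln (4 * (sin t)^2) + (8 * sin t * cos t) * k / (4 * (sin t)^2)))) (at t)"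
    apply (rule DERIV_powr)
      apply (auto intro!: derivative_eq_intros simp: pos)
    done
  have "((\<lambda>t. sin t * (4 * (sin t)^2) powr k) has_real_derivative
      (cos t * (4 * (sin t)^2) powr k + ((4 * (sin t)^2) powr k * (0 * ln (4 * (sin t)^2) + (8 * sin t * cos t) * k / (4 * (sin t)^2))) * sin t)) (at t)"
    by (rule DERIV_mult[OF DERIV_sin d])
  moreover have "cos t * (4 * (sin t)^2) powr k + ((4 * (sin t)^2) powr k * (0 * ln (4 * (sin t)^2) + (8 * sin t * cos t) * k / (4 * (sin t)^2))) * sin t
      = (2*k+1) * cos t * (4 * (sin t)^2) powr k"
    using assms by (simp add: field_simps power2_eq_square)
  ultimately have "((\<lambda>t. sin t * (4 * (sin t)^2) powr k) has_real_derivative ((2*k+1) * cos t * (4 * (sin t)^2) powr k)) (at t)"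
    by (rule DERIV_cong)
  then show ?thesis by (simp add: delta_alt[abs_def] delta_alt)
qed

lemma cont_G: "k \<ge> 0 \<Longrightarrow> continuous_on S (\<lambda>t. sin t * delta k t)"
proof (cases "k = 0")
  case True
  then have eq: "(\<lambda>t. sin t * delta k t) = (\<lambda>t. sin t)" by (auto simp: delta_def)
  show ?thesis unfolding eq by (intro continuous_intros)
next
  case False
  assume "k \<ge> 0"
  then have "k > 0" using False by auto
  have "continuous_on S (\<lambda>t. \<bar>2 * sin t\<bar> powr (2 * k))"
    by (rule continuous_on_powr') (auto intro!: continuous_intros simp: \<open>k > 0\<close>)
  have "continuous_on S sin" by (intro continuous_intros)
  from continuous_on_mult[OF this \<open>continuous_on S (\<lambda>t. \<bar>2 * sin t\<bar> powr (2 * k))\<close>]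
  show ?thesis unfolding delta_def .
qed

lemma cos_ex: "complex_of_real (cos t) = (ex 1 t + ex (-1) t) / 2"
  by (simp add: cos_of_real[symmetric] cos_exp_eq ex_def)

lemma sin_ex: "complex_of_real (sin t) = (ex 1 t - ex (-1) t) / (2 * \<i>)"
  by (simp add: sin_of_real[symmetric] sin_exp_eq ex_def)

lemma mom_rec:
  assumes k: "k \<ge> 0"
  shows "(2 * of_real k + of_int r + 2) * mom k (r + 2) + (2 * of_real k - of_int r) * mom k r = 0"
proof -
  define F where "F t = complex_of_real (sin t * delta k t) * ex (r+1) t" for t
  define F' where "F' t = (of_real (delta k t) / 2) * ((2 * of_real k + of_int r + 2) * ex (r+2) t + (2 * of_real k - of_int r) * ex r t)" for t
  have "(F' has_integral (F (2*pi) - F 0)) {0..2*pi}"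
  proof (rule fundamental_theorem_of_calculus_interior_strong[of "{pi}"])
    show "continuous_on {0..2*pi} F" unfolding F_def
      by (intro continuous_intros cont_ex cont_G k)
    fix t assume t: "t \<in> {0<..<2*pi} - {pi}"
    then have st: "sin t \<noteq> 0" using sin_nz[of t] by auto
    have "(F has_vector_derivative (complex_of_real (sin t * delta k t) * (\<i> * of_int (r+1) * ex (r+1) t)
         + complex_of_real ((2*k+1) * cos t * delta k t) * ex (r+1) t)) (at t)"
      unfolding F_def
      by (intro derivative_intros deriv_G st deriv_ex)
    moreover have "complex_of_real (sin t * delta k t) * (\<i> * of_int (r+1) * ex (r+1) t)
         + complex_of_real ((2*k+1) * cos t * delta k t) * ex (r+1) t = F' t"
    proof -
      have e1: "ex 1 t * ex (r+1) t = ex (r+2) t" by (simp add: ex_mult add.commute)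
      have e2: "ex (-1) t * ex (r+1) t = ex r t" by (simp add: ex_mult)
      show ?thesis
        unfolding F'_def of_real_mult sin_ex cos_ex
        apply (simp add: field_simps)
        apply (simp add: e1[symmetric] e2[symmetric] algebra_simps)
        done
    qed
    ultimately show "(F has_vector_derivative F' t) (at t)" by simp
  qed auto
  moreover have "F (2*pi) = 0" "F 0 = 0" by (simp_all add: F_def)
  ultimately have "(F' has_integral 0) {0..2*pi}" by simp
  then have "integral {0..2*pi} F' = 0" by (rule integral_unique)
  moreover have "integral {0..2*pi} F' = (1/2) * ((2 * of_real k + of_int r + 2) * mom k (r + 2) + (2 * of_real k - of_int r) * mom k r)"
  proof -
    have "F' = (\<lambda>t. (1/2) * ((2 * of_real k + of_int r + 2) * (ex (r+2) t * of_real (delta k t)) + (2 * of_real k - of_int r) * (ex r t * of_real (delta k t))))"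
      by (auto simp: F'_def algebra_simps)
    moreover have "integral {0..2*pi} (\<lambda>t. (2 * of_real k + of_int r + 2) * (ex (r+2) t * of_real (delta k t)) + (2 * of_real k - of_int r) * (ex r t * of_real (delta k t)))
       = (2 * of_real k + of_int r + 2) * mom k (r + 2) + (2 * of_real k - of_int r) * mom k r"
      by (subst integral_add) (auto intro!: integrable_on_mult_right integrable_ex_delta k simp: mom_def)
    ultimately show ?thesis by simp
  qed
  ultimately show ?thesis by simp
qed

lemma integral_flip: "integral {0..2*pi} (\<lambda>t. g (2*pi - t)) = integral {0..2*pi} (g :: real \<Rightarrow> complex)"
proof -
  have "integral {0..2*pi} (\<lambda>t. g (2*pi - t)) = integral {0..2*pi} ((\<lambda>x. g (-x)) \<circ> (+) (-2*pi))"
    by (simp add: o_def)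
  also have "... = integral {-(2*pi)..-0} (\<lambda>x. g (-x))"
    by (subst integral_shift_Icc_real) simp
  also have "... = integral {0..2*pi} g" by (rule Henstock_Kurzweil_Integration.integral_reflect_real)
  finally show ?thesis .
qed

lemma ex_flip: "ex p (2*pi - t) = ex (-p) t"
proof -
  have e: "\<i> * of_int p * of_real (2*pi - t) = \<i> * of_int p * of_real (2*pi) + \<i> * of_int (-p) * of_real t"
    by (simp add: algebra_simps)
  have "ex p (2*pi - t) = ex p (2*pi) * ex (-p) t"
    unfolding ex_def e exp_add ..
  then show ?thesis by (simp add: ex_2pi)
qed

lemma delta_flip: "delta k (2*pi - t) = delta k t"
  by (simp add: delta_def sin_diff)

lemma mom_even: "mom k (-p) = mom k p"
proof -
  have "mom k p = integral {0..2*pi} (\<lambda>t. ex p (2*pi - t) * of_real (delta k (2*pi - t)))"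
    unfolding mom_def by (rule integral_flip[symmetric])
  also have "... = mom k (-p)" unfolding mom_def ex_flip delta_flip ..
  finally show ?thesis by simp
qed

lemma hasint_sum:
  assumes k: "k \<ge> 0" and J: "finite J"
  shows "((\<lambda>x. (\<Sum>j\<in>J. a j * ex j x) * cnj (ex l x) * of_real (delta k x)) has_integral (\<Sum>j\<in>J. a j * mom k (j - l))) {0..2*pi}"
proof -
  have "(\<lambda>x. (\<Sum>j\<in>J. a j * ex j x) * cnj (ex l x) * of_real (delta k x))
      = (\<lambda>x. \<Sum>j\<in>J. a j * (ex (j - l) x * of_real (delta k x)))"
    by (auto simp: sum_distrib_right ex_cnj mult.assoc ex_mult intro!: sum.cong)
  moreover have "((\<lambda>x. \<Sum>j\<in>J. a j * (ex (j - l) x * of_real (delta k x))) has_integral (\<Sum>j\<in>J. a j * mom k (j - l))) {0..2*pi}"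
    apply (rule has_integral_sum[OF J])
    apply (rule has_integral_mult_right)
    unfolding mom_def
    by (rule integrable_integral[OF integrable_ex_delta[OF k]])
  ultimately show ?thesis by simp
qed

lemma ip_sum:
  assumes k: "k \<ge> 0" and J: "finite J"
  shows "ip k (\<lambda>t. \<Sum>j\<in>J. a j * ex j t) (ex l) = (\<Sum>j\<in>J. a j * mom k (j - l)) / of_real (2*pi)"
  unfolding ip_def using integral_unique[OF hasint_sum[OF k J]] by simp

lemma integral_ex: "integral {0..2*pi} (ex m) = (if m = 0 then of_real (2*pi) else 0)"
  using int_ex[of m] by (rule integral_unique)

lemma integrable_ex: "ex m integrable_on {0..2*pi}"
  using int_ex[of m] by (auto simp: integrable_on_def)

lemma fourier_coeff:
  assumes J: "finite J" and j: "j \<in> J"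
  shows "integral {0..2*pi} (\<lambda>t. (\<Sum>m\<in>J. a m * ex m t) * ex (-j) t) = a j * of_real (2*pi)"
proof -
  have eq: "(\<lambda>t. (\<Sum>m\<in>J. a m * ex m t) * ex (-j) t) = (\<lambda>t. \<Sum>m\<in>J. a m * ex (m - j) t)"
    by (auto simp: sum_distrib_right mult.assoc ex_mult)
  have "integral {0..2*pi} (\<lambda>t. \<Sum>m\<in>J. a m * ex (m - j) t) = (\<Sum>m\<in>J. a m * integral {0..2*pi} (ex (m - j)))"
    apply (subst integral_sum[OF J])
    by (auto intro!: integrable_on_mult_right integrable_ex)
  also have "... = (\<Sum>m\<in>J. if m = j then a j * of_real (2*pi) else 0)"
    by (rule sum.cong) (auto simp: integral_ex)
  also have "... = a j * of_real (2*pi)" using J j by simp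
  finally show ?thesis using eq by simp
qed

lemma PD:
  assumes k: "k \<ge> 0" and J: "finite J"
    and orth: "\<And>l. l \<in> J \<Longrightarrow> (\<Sum>j\<in>J. a j * mom k (j - l)) = 0"
  shows "\<And>j. j \<in> J \<Longrightarrow> a j = 0"
proof -
  define f where "f t = (\<Sum>j\<in>J. a j * ex j t)" for t
  have contf: "continuous_on S f" for S unfolding f_def
    by (intro continuous_intros cont_ex)
  define hc where "hc t = (cmod (f t))^2 * dc k t" for t
  have conthc: "continuous_on {0..2*pi} hc" unfolding hc_def
    by (intro continuous_intros contf cont_dc k)
  obtain Ir where Ir: "(hc has_integral Ir) {0..2*pi}"
    using integrable_continuous_interval[OF conthc] by (auto simp: integrable_on_def)
  have "((\<lambda>t. complex_of_real (hc t)) has_integral of_real Ir) {0..2*pi}"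
    by (rule has_integral_of_real[OF Ir])
  then have I2: "((\<lambda>t. f t * cnj (f t) * of_real (delta k t)) has_integral of_real Ir) {0..2*pi}"
    apply (rule has_integral_spike_finite[OF finite_Z, rotated])
    using Z_sin delta_dc by (auto simp: hc_def complex_norm_square[symmetric])
  have "integral {0..2*pi} (\<lambda>t. f t * cnj (f t) * of_real (delta k t))
      = (\<Sum>l\<in>J. cnj (a l) * (\<Sum>j\<in>J. a j * mom k (j - l)))"
  proof -
    have "(\<lambda>t. f t * cnj (f t) * of_real (delta k t))
       = (\<lambda>t. \<Sum>l\<in>J. cnj (a l) * (f t * cnj (ex l t) * of_real (delta k t)))"
    proof -
      have c: "cnj (f t) = (\<Sum>l\<in>J. cnj (a l) * cnj (ex l t))" for t by (simp add: f_def)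
      show ?thesis by (auto simp: c sum_distrib_left sum_distrib_right algebra_simps)
    qed
    moreover have "((\<lambda>t. \<Sum>l\<in>J. cnj (a l) * (f t * cnj (ex l t) * of_real (delta k t))) has_integral
        (\<Sum>l\<in>J. cnj (a l) * (\<Sum>j\<in>J. a j * mom k (j - l)))) {0..2*pi}"
      apply (rule has_integral_sum[OF J])
      apply (rule has_integral_mult_right)
      unfolding f_def by (rule hasint_sum[OF k J])
    ultimately show ?thesis by (simp add: integral_unique)
  qed
  also have "... = 0" using orth by simp
  finally have "of_real Ir = (0::complex)" using I2 by (simp add: integral_unique)
  then have "Ir = 0" by simp
  then have hc0: "hc t = 0" if "t \<in> {0..2*pi}" for t
  proof -
    have nn: "0 \<le> hc x" for x by (simp add: hc_def dc_def delta_def)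
    show ?thesis
      using has_integral_0_cbox_imp_0[of 0 "2*pi" hc t] conthc Ir \<open>Ir = 0\<close> that nn
      using pi_gt_zero by (auto simp: box_real)
  qed
  have f0: "f t = 0" if "t \<in> {0..2*pi} - Z" for t
  proof -
    have "sin t \<noteq> 0" using Z_sin that by auto
    then have "dc k t > 0" by (rule dc_pos)
    moreover have "hc t = 0" using hc0 that by auto
    ultimately show ?thesis by (simp add: hc_def)
  qed
  fix j assume j: "j \<in> J"
  have "((\<lambda>t. f t * ex (-j) t) has_integral 0) {0..2*pi}"
    apply (rule has_integral_spike_finite[OF finite_Z _ has_integral_0])
    using f0 by auto
  then have "integral {0..2*pi} (\<lambda>t. f t * ex (-j) t) = 0" by (rule integral_unique)
  then have "a j * of_real (2*pi) = 0"
    using fourier_coeff[OF J j, of a] unfolding f_def by simp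
  then show "a j = 0" by simp
qed


lemma solve:
  fixes G :: "int \<Rightarrow> int \<Rightarrow> complex"
  assumes "finite S"
    and "\<And>T c. T \<subseteq> S \<Longrightarrow> (\<And>l. l \<in> T \<Longrightarrow> (\<Sum>j\<in>T. c j * G j l) = 0) \<Longrightarrow> (\<And>j. j \<in> T \<Longrightarrow> c j = 0)"
  shows "\<exists>c. \<forall>l\<in>S. (\<Sum>j\<in>S. c j * G j l) = b l"
  using assms
proof (induction S arbitrary: b rule: finite_induct)
  case empty
  then show ?case by simp
next
  case (insert a F)
  have injF: "\<And>T c. T \<subseteq> F \<Longrightarrow> (\<And>l. l \<in> T \<Longrightarrow> (\<Sum>j\<in>T. c j * G j l) = 0) \<Longrightarrow> (\<And>j. j \<in> T \<Longrightarrow> c j = 0)"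
    using insert.prems by blast
  have IH': "\<exists>c. \<forall>l\<in>F. (\<Sum>j\<in>F. c j * G j l) = bb l" for bb
    apply (rule insert.IH) using injF by blast
  obtain y where y: "\<forall>l\<in>F. (\<Sum>j\<in>F. y j * G j l) = G a l"
    using IH' by blast
  obtain x0 where x0: "\<forall>l\<in>F. (\<Sum>j\<in>F. x0 j * G j l) = b l"
    using IH' by blast
  define D where "D = G a a - (\<Sum>j\<in>F. y j * G j a)"
  have "D \<noteq> 0"
  proof
    assume D0: "D = 0"
    define c where "c j = (if j = a then 1 else - y j)" for j
    have sumc: "(\<Sum>j\<in>insert a F. c j * G j l) = G a l - (\<Sum>j\<in>F. y j * G j l)" for l
    proof -
      have "(\<Sum>j\<in>insert a F. c j * G j l) = c a * G a l + (\<Sum>j\<in>F. c j * G j l)"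
        using insert.hyps by (simp add: sum.insert)
      also have "(\<Sum>j\<in>F. c j * G j l) = (\<Sum>j\<in>F. - (y j * G j l))"
        using insert.hyps by (auto simp: c_def intro!: sum.cong)
      finally show ?thesis by (simp add: c_def sum_negf)
    qed
    have "\<And>l. l \<in> insert a F \<Longrightarrow> (\<Sum>j\<in>insert a F. c j * G j l) = 0"
      using sumc y D0 unfolding D_def by auto
    then have "c a = 0" using insert.prems[of "insert a F" c a] by blast
    then show False by (simp add: c_def)
  qed
  define t where "t = (b a - (\<Sum>j\<in>F. x0 j * G j a)) / D"
  define c where "c j = (if j = a then t else x0 j - t * y j)" for j
  have sumc: "(\<Sum>j\<in>insert a F. c j * G j l) = t * G a l + (\<Sum>j\<in>F. x0 j * G j l) - t * (\<Sum>j\<in>F. y j * G j l)" for l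
  proof -
    have "(\<Sum>j\<in>insert a F. c j * G j l) = c a * G a l + (\<Sum>j\<in>F. c j * G j l)"
      using insert.hyps by (simp add: sum.insert)
    also have "(\<Sum>j\<in>F. c j * G j l) = (\<Sum>j\<in>F. x0 j * G j l - t * (y j * G j l))"
      using insert.hyps by (auto simp: c_def algebra_simps intro!: sum.cong)
    finally show ?thesis by (simp add: c_def sum_subtractf sum_distrib_left)
  qed
  have "\<forall>l\<in>insert a F. (\<Sum>j\<in>insert a F. c j * G j l) = b l"
  proof
    fix l assume l: "l \<in> insert a F"
    show "(\<Sum>j\<in>insert a F. c j * G j l) = b l"
    proof (cases "l = a")
      case True
      have "t * G a a + (\<Sum>j\<in>F. x0 j * G j a) - t * (\<Sum>j\<in>F. y j * G j a) = t * D + (\<Sum>j\<in>F. x0 j * G j a)"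
        by (simp add: D_def algebra_simps)
      also have "... = b a" using \<open>D \<noteq> 0\<close> by (simp add: t_def)
      finally show ?thesis using True sumc by simp
    next
      case False
      then have "l \<in> F" using l by auto
      then show ?thesis using sumc x0 y by simp
    qed
  qed
  then show ?case by blast
qed

definition W :: "int \<Rightarrow> int set" where
  "W n = {j. \<bar>j\<bar> < n \<and> even (n - \<bar>j\<bar>)}"

lemma W_sub: "W n \<subseteq> {-n..n}"
  by (auto simp: W_def)

lemma finite_W: "finite (W n)"
  using W_sub finite_subset by blast

lemma W_neg: "j \<in> W n \<Longrightarrow> -j \<in> W n"
  by (simp add: W_def)

lemma n_notin_W: "n \<notin> W n" "-n \<notin> W n"
  by (auto simp: W_def)

lemma tri_pos: "n \<ge> 1 \<Longrightarrow> tri j n \<longleftrightarrow> j \<in> W n"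
  by (auto simp: tri_def W_def)

lemma tri_neg: "n \<ge> 1 \<Longrightarrow> tri j (-n) \<longleftrightarrow> j \<in> insert n (W n)"
  by (auto simp: tri_def W_def)

lemma tri_box: "tri j m \<Longrightarrow> j \<in> {-\<bar>m\<bar>..\<bar>m\<bar>}"
  by (auto simp: tri_def)

lemma tri_irrefl: "\<not> tri m m"
  by (auto simp: tri_def)

definition Low :: "int \<Rightarrow> int set" where
  "Low m = {j\<in>{-\<bar>m\<bar>..\<bar>m\<bar>}. tri j m}"

lemma Low_eq: "Low m = {j. tri j m}"
  using tri_box by (auto simp: Low_def)

lemma finite_Low: "finite (Low m)"
  unfolding Low_def by (rule finite_subset[of _ "{-\<bar>m\<bar>..\<bar>m\<bar>}"]) auto

lemma expoly_sum:
  assumes B: "finite B" "Low m \<subseteq> B" "m \<in> B"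
    and c: "\<And>j. j \<notin> Low m \<Longrightarrow> c j = 0"
  shows "expoly c m z = (\<Sum>j\<in>B. (c(m := 1)) j * exp (of_int j * z))"
proof -
  have mL: "m \<notin> Low m" by (simp add: Low_eq tri_irrefl)
  have "(\<Sum>j\<in>B. (c(m := 1)) j * exp (of_int j * z)) = exp (of_int m * z) + (\<Sum>j\<in>B - {m}. c j * exp (of_int j * z))"
    using B by (simp add: sum.remove[of B m])
  also have "(\<Sum>j\<in>B - {m}. c j * exp (of_int j * z)) = (\<Sum>j\<in>Low m. c j * exp (of_int j * z))"
    apply (rule sum.mono_neutral_right)
    using B mL c by auto
  finally show ?thesis by (simp add: expoly_def Low_def)
qed

lemma ip_expoly:
  assumes k: "k \<ge> 0" and B: "finite B" "Low m \<subseteq> B" "m \<in> B"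
    and c: "\<And>j. j \<notin> Low m \<Longrightarrow> c j = 0"
  shows "ip k (\<lambda>t. expoly c m (\<i> * of_real t)) (\<lambda>t. exp (\<i> * of_int l * of_real t))
     = (\<Sum>j\<in>B. (c(m := 1)) j * mom k (j - l)) / of_real (2*pi)"
proof -
  have "(\<lambda>t. expoly c m (\<i> * of_real t)) = (\<lambda>t. \<Sum>j\<in>B. (c(m := 1)) j * ex j t)"
    by (auto simp: expoly_sum[OF B c] ex_def algebra_simps)
  moreover have "(\<lambda>t. exp (\<i> * of_int l * of_real t)) = ex l"
    by (auto simp: ex_def)
  ultimately show ?thesis using ip_sum[OF k B(1)] by simp
qed

lemma HO_iff:
  assumes k: "k \<ge> 0"
  shows "HO_coeffs k m c \<longleftrightarrow> (\<forall>j. j \<notin> Low m \<longrightarrow> c j = 0) \<and>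
     (\<forall>l \<in> Low m. (\<Sum>j\<in>{-\<bar>m\<bar>..\<bar>m\<bar>}. (c(m := 1)) j * mom k (j - l)) = 0)"
proof -
  have B: "finite {-\<bar>m\<bar>..\<bar>m\<bar>}" "Low m \<subseteq> {-\<bar>m\<bar>..\<bar>m\<bar>}" "m \<in> {-\<bar>m\<bar>..\<bar>m\<bar>}"
    by (auto simp: Low_def)
  show ?thesis
    unfolding HO_coeffs_def
    using ip_expoly[OF k B] by (auto simp: Low_eq)
qed

lemma HO_unique:
  assumes k: "k \<ge> 0" and h1: "HO_coeffs k m c1" and h2: "HO_coeffs k m c2"
  shows "c1 = c2"
proof -
  let ?B = "{-\<bar>m\<bar>..\<bar>m\<bar>}"
  have B: "Low m \<subseteq> ?B" "m \<in> ?B" by (auto simp: Low_def)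
  have mL: "m \<notin> Low m" by (simp add: Low_eq tri_irrefl)
  have s1: "\<forall>j. j \<notin> Low m \<longrightarrow> c1 j = 0" and o1: "\<forall>l \<in> Low m. (\<Sum>j\<in>?B. (c1(m := 1)) j * mom k (j - l)) = 0"
    using h1 HO_iff[OF k] by auto
  have s2: "\<forall>j. j \<notin> Low m \<longrightarrow> c2 j = 0" and o2: "\<forall>l \<in> Low m. (\<Sum>j\<in>?B. (c2(m := 1)) j * mom k (j - l)) = 0"
    using h2 HO_iff[OF k] by auto
  define d where "d j = c1 j - c2 j" for j
  have "\<And>l. l \<in> Low m \<Longrightarrow> (\<Sum>j\<in>Low m. d j * mom k (j - l)) = 0"
  proof -
    fix l assume l: "l \<in> Low m"
    have "(\<Sum>j\<in>?B. (c1(m := 1)) j * mom k (j - l)) - (\<Sum>j\<in>?B. (c2(m := 1)) j * mom k (j - l))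
        = (\<Sum>j\<in>?B. d j * mom k (j - l))"
      using mL s1 s2 by (auto simp: sum_subtractf[symmetric] d_def algebra_simps intro!: sum.cong)
    also have "... = (\<Sum>j\<in>Low m. d j * mom k (j - l))"
      apply (rule sum.mono_neutral_right)
      using B s1 s2 by (auto simp: d_def)
    finally show "(\<Sum>j\<in>Low m. d j * mom k (j - l)) = 0" using o1 o2 l by simp
  qed
  then have "\<And>j. j \<in> Low m \<Longrightarrow> d j = 0"
    using PD[OF k finite_Low] by blast
  then have "c1 j = c2 j" for j using s1 s2 by (cases "j \<in> Low m") (auto simp: d_def)
  then show ?thesis by auto
qed

lemma Low_pos: "n \<ge> 1 \<Longrightarrow> Low n = W n"
  by (auto simp: Low_eq tri_pos)

lemma Low_neg: "n \<ge> 1 \<Longrightarrow> Low (-n) = insert n (W n)"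
  by (auto simp: Low_eq tri_neg)

lemma HO_exists:
  assumes k: "k \<ge> 0" and n: "n \<ge> 1"
  shows "\<exists>c. HO_coeffs k n c"
proof -
  have "\<exists>c. \<forall>l\<in>W n. (\<Sum>j\<in>W n. c j * mom k (j - l)) = - mom k (n - l)"
    apply (rule solve[OF finite_W])
    subgoal for T c j
      by (rule PD[OF k, of T c]) (auto intro: finite_subset[OF _ finite_W])
    done
  then obtain c0 where c0: "\<forall>l\<in>W n. (\<Sum>j\<in>W n. c0 j * mom k (j - l)) = - mom k (n - l)" by blast
  define c where "c j = (if j \<in> W n then c0 j else 0)" for j
  have absn: "\<bar>n\<bar> = n" using n by simp
  have "\<forall>l\<in>Low n. (\<Sum>j\<in>{-\<bar>n\<bar>..\<bar>n\<bar>}. (c(n := 1)) j * mom k (j - l)) = 0"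
  proof
    fix l assume l: "l \<in> Low n"
    have "(\<Sum>j\<in>{-n..n}. (c(n := 1)) j * mom k (j - l)) = mom k (n - l) + (\<Sum>j\<in>{-n..n} - {n}. c j * mom k (j - l))"
      using n by (simp add: sum.remove[of "{-n..n}" n])
    also have "(\<Sum>j\<in>{-n..n} - {n}. c j * mom k (j - l)) = (\<Sum>j\<in>W n. c0 j * mom k (j - l))"
      apply (rule sum.mono_neutral_cong_right)
      using W_sub n_notin_W by (auto simp: c_def)
    finally show "(\<Sum>j\<in>{-\<bar>n\<bar>..\<bar>n\<bar>}. (c(n := 1)) j * mom k (j - l)) = 0"
      using c0 l Low_pos[OF n] absn by simp
  qed
  moreover have "\<forall>j. j \<notin> Low n \<longrightarrow> c j = 0"
    using Low_pos[OF n] by (simp add: c_def)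
  ultimately show ?thesis using HO_iff[OF k] by blast
qed


definition Psi :: "real \<Rightarrow> int \<Rightarrow> complex" where
  "Psi k r = (of_real k - of_int r / 2) * mom k r"

lemma Psi_step:
  assumes k: "k \<ge> 0"
  shows "Psi k (r + 2) - Psi k r = 2 * of_real k * mom k (r + 2)"
proof -
  have rec: "(2 * of_real k + of_int r + 2) * mom k (r + 2) + (2 * of_real k - of_int r) * mom k r = 0"
    by (rule mom_rec[OF k])
  have "Psi k (r + 2) - Psi k r = (of_real k - (of_int r + 2) / 2) * mom k (r+2) - (of_real k - of_int r / 2) * mom k r"
    by (simp add: Psi_def)
  also have "... = 2 * of_real k * mom k (r + 2) - ((2 * of_real k + of_int r + 2) * mom k (r + 2) + (2 * of_real k - of_int r) * mom k r) / 2"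
    by (simp add: field_simps)
  also have "... = 2 * of_real k * mom k (r + 2)" using rec by simp
  finally show ?thesis .
qed

lemma telescope:
  assumes k: "k \<ge> 0"
  shows "2 * of_real k * (\<Sum>i\<in>{1..int m}. mom k (r0 + 2 * i)) = Psi k (r0 + 2 * int m) - Psi k r0"
proof (induction m)
  case 0
  then show ?case by simp
next
  case (Suc m)
  have s: "{1..int (Suc m)} = insert (int m + 1) {1..int m}" by auto
  have "2 * of_real k * (\<Sum>i\<in>{1..int (Suc m)}. mom k (r0 + 2 * i))
      = 2 * of_real k * mom k (r0 + 2 * int m + 2) + 2 * of_real k * (\<Sum>i\<in>{1..int m}. mom k (r0 + 2 * i))"
    unfolding s by (simp add: algebra_simps)
  also have "... = Psi k (r0 + 2 * int m + 2) - Psi k r0"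
  proof -
    have st: "Psi k (r0 + 2 * int m + 2) = 2 * of_real k * mom k (r0 + 2 * int m + 2) + Psi k (r0 + 2 * int m)"
      using Psi_step[OF k, of "r0 + 2 * int m"] by (simp add: diff_eq_eq)
    show ?thesis unfolding st Suc.IH by simp
  qed
  finally show ?case by (simp add: algebra_simps)
qed

definition sg :: "int \<Rightarrow> int \<Rightarrow> complex" where
  "sg j p = (if 0 < j \<and> -j < p \<and> p \<le> j \<and> even (j - p) then 1
     else if j < 0 \<and> j < p \<and> p \<le> -j \<and> even (j - p) then -1 else 0)"

definition tau :: "real \<Rightarrow> int \<Rightarrow> int \<Rightarrow> complex" where
  "tau k j p = (if p = j then of_int j - of_real k else 0) + 2 * of_real k * sg j p"

lemma img_pos:
  fixes j N :: int
  assumes "0 < j" "j \<le> N"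
  shows "{p \<in> {-N..N}. -j < p \<and> p \<le> j \<and> even (j - p)} = (\<lambda>i. 2 * i - j) ` {1..j}"
proof
  show "(\<lambda>i. 2 * i - j) ` {1..j} \<subseteq> {p \<in> {-N..N}. -j < p \<and> p \<le> j \<and> even (j - p)}"
    using assms by auto
  show "{p \<in> {-N..N}. -j < p \<and> p \<le> j \<and> even (j - p)} \<subseteq> (\<lambda>i. 2 * i - j) ` {1..j}"
  proof
    fix p assume p: "p \<in> {p \<in> {-N..N}. -j < p \<and> p \<le> j \<and> even (j - p)}"
    show "p \<in> (\<lambda>i. 2 * i - j) ` {1..j}"
    proof (rule image_eqI[where x = "(p + j) div 2"])
      have "even (j - p)" using p by simp
      then show "p = 2 * ((p + j) div 2) - j" by presburger
      show "(p + j) div 2 \<in> {1..j}" using p by auto presburger+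
    qed
  qed
qed

lemma img_neg:
  fixes j N :: int
  assumes "j < 0" "-j \<le> N"
  shows "{p \<in> {-N..N}. j < p \<and> p \<le> -j \<and> even (j - p)} = (\<lambda>i. j + 2 * i) ` {1..-j}"
proof
  show "(\<lambda>i. j + 2 * i) ` {1..-j} \<subseteq> {p \<in> {-N..N}. j < p \<and> p \<le> -j \<and> even (j - p)}"
    using assms by auto
  show "{p \<in> {-N..N}. j < p \<and> p \<le> -j \<and> even (j - p)} \<subseteq> (\<lambda>i. j + 2 * i) ` {1..-j}"
  proof
    fix p assume p: "p \<in> {p \<in> {-N..N}. j < p \<and> p \<le> -j \<and> even (j - p)}"
    show "p \<in> (\<lambda>i. j + 2 * i) ` {1..-j}"
    proof (rule image_eqI[where x = "(p - j) div 2"])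
      have "even (j - p)" using p by simp
      then show "p = j + 2 * ((p - j) div 2)" by presburger
      show "(p - j) div 2 \<in> {1..-j}" using p by auto presburger+
    qed
  qed
qed

lemma sg_sum:
  assumes k: "k \<ge> 0" and j: "\<bar>j\<bar> \<le> N"
  shows "2 * of_real k * (\<Sum>p\<in>{-N..N}. sg j p * mom k (p - l)) = Psi k (j - l) - Psi k (-j - l)"
proof (cases "0 < j")
  case True
  have "(\<Sum>p\<in>{-N..N}. sg j p * mom k (p - l)) = (\<Sum>p\<in>{-N..N}. if -j < p \<and> p \<le> j \<and> even (j - p) then mom k (p - l) else 0)"
    using True by (intro sum.cong) (auto simp: sg_def)
  also have "... = (\<Sum>p\<in>{p \<in> {-N..N}. -j < p \<and> p \<le> j \<and> even (j - p)}. mom k (p - l))"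
    by (rule sum.inter_filter[symmetric]) simp
  also have "... = (\<Sum>i\<in>{1..j}. mom k (2 * i - j - l))"
    using j unfolding img_pos[OF True, of N, OF order.trans[OF abs_ge_self j]]
    by (subst sum.reindex) (auto simp: inj_on_def)
  also have "... = (\<Sum>i\<in>{1..int (nat j)}. mom k ((-j - l) + 2 * i))"
    using True by (auto intro!: sum.cong simp: algebra_simps)
  finally show ?thesis using telescope[OF k, of "-j-l" "nat j"] True by simp
next
  case False
  show ?thesis
  proof (cases "j < 0")
    case True
    have "(\<Sum>p\<in>{-N..N}. sg j p * mom k (p - l)) = - (\<Sum>p\<in>{-N..N}. if j < p \<and> p \<le> -j \<and> even (j - p) then mom k (p - l) else 0)"
      using True by (subst sum_negf[symmetric], intro sum.cong) (auto simp: sg_def)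
    also have "(\<Sum>p\<in>{-N..N}. if j < p \<and> p \<le> -j \<and> even (j - p) then mom k (p - l) else 0) = (\<Sum>p\<in>{p \<in> {-N..N}. j < p \<and> p \<le> -j \<and> even (j - p)}. mom k (p - l))"
      by (rule sum.inter_filter[symmetric]) simp
    also have "(\<Sum>p\<in>{p \<in> {-N..N}. j < p \<and> p \<le> -j \<and> even (j - p)}. mom k (p - l)) = (\<Sum>i\<in>{1..-j}. mom k (j + 2 * i - l))"
      using j unfolding img_neg[OF True, of N, OF order.trans[OF abs_ge_minus_self j]]
      by (subst sum.reindex) (auto simp: inj_on_def)
    also have "... = (\<Sum>i\<in>{1..int (nat (-j))}. mom k ((j - l) + 2 * i))"
      using True by (auto intro!: sum.cong simp: algebra_simps)
    finally show ?thesis using telescope[OF k, of "j-l" "nat (-j)"] True by (simp add: algebra_simps)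
  next
    case False
    then have "j = 0" using \<open>\<not> 0 < j\<close> by simp
    then show ?thesis by (simp add: sg_def)
  qed
qed

lemma Ksum:
  assumes k: "k \<ge> 0" and j: "\<bar>j\<bar> \<le> N"
  shows "(\<Sum>p\<in>{-N..N}. tau k j p * mom k (p - l))
     = (of_int (j + l) / 2) * mom k (j - l) - (of_real k + of_int (j + l) / 2) * mom k (j + l)"
proof -
  have "(\<Sum>p\<in>{-N..N}. tau k j p * mom k (p - l))
      = (\<Sum>p\<in>{-N..N}. (if p = j then (of_int j - of_real k) * mom k (j - l) else 0) + 2 * of_real k * (sg j p * mom k (p - l)))"
    by (rule sum.cong) (auto simp: tau_def algebra_simps)
  also have "... = (\<Sum>p\<in>{-N..N}. (if p = j then (of_int j - of_real k) * mom k (j - l) else 0)) + 2 * of_real k * (\<Sum>p\<in>{-N..N}. sg j p * mom k (p - l))"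
    by (simp add: sum.distrib sum_distrib_left)
  also have "(\<Sum>p\<in>{-N..N}. (if p = j then (of_int j - of_real k) * mom k (j - l) else 0)) = (of_int j - of_real k) * mom k (j - l)"
    using j by (simp add: sum.delta' abs_le_iff)
  also have "2 * of_real k * (\<Sum>p\<in>{-N..N}. sg j p * mom k (p - l)) = Psi k (j - l) - Psi k (-j - l)"
    by (rule sg_sum[OF k j])
  also have "Psi k (-j - l) = (of_real k + of_int (j + l) / 2) * mom k (j + l)"
    using mom_even[of k "j + l"] by (simp add: Psi_def field_simps)
  finally show ?thesis by (simp add: Psi_def field_simps)
qed


definition Kf :: "real \<Rightarrow> int \<Rightarrow> int \<Rightarrow> complex" where
  "Kf k j l = (of_int (j + l) / 2) * mom k (j - l) - (of_real k + of_int (j + l) / 2) * mom k (j + l)"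

lemma Kf_sym: "Kf k j l = Kf k l j"
  using mom_even[of k "j - l"] by (simp add: Kf_def algebra_simps)

definition Om :: "real \<Rightarrow> int \<Rightarrow> (int \<Rightarrow> complex) \<Rightarrow> int \<Rightarrow> complex" where
  "Om k N u l = (\<Sum>j\<in>{-N..N}. u j * mom k (j - l))"

definition beta :: "real \<Rightarrow> int \<Rightarrow> (int \<Rightarrow> complex) \<Rightarrow> (int \<Rightarrow> complex) \<Rightarrow> complex" where
  "beta k N u v = (\<Sum>l\<in>{-N..N}. v l * Om k N u l)"

definition Tb :: "real \<Rightarrow> int \<Rightarrow> (int \<Rightarrow> complex) \<Rightarrow> int \<Rightarrow> complex" where
  "Tb k N u p = (\<Sum>j\<in>{-N..N}. u j * tau k j p)"

lemma mom_swap: "mom k (a - b) = mom k (b - a)"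
  using mom_even[of k "b - a"] by simp

lemma Om_Tb:
  assumes k: "k \<ge> 0"
  shows "Om k N (Tb k N u) l = (\<Sum>j\<in>{-N..N}. u j * Kf k j l)"
proof -
  have "Om k N (Tb k N u) l = (\<Sum>p\<in>{-N..N}. \<Sum>j\<in>{-N..N}. u j * (tau k j p * mom k (p - l)))"
    by (simp add: Om_def Tb_def sum_distrib_right mult.assoc)
  also have "... = (\<Sum>j\<in>{-N..N}. \<Sum>p\<in>{-N..N}. u j * (tau k j p * mom k (p - l)))"
    by (rule sum.swap)
  also have "... = (\<Sum>j\<in>{-N..N}. u j * Kf k j l)"
    by (rule sum.cong) (auto simp: sum_distrib_left[symmetric] Ksum[OF k] Kf_def)
  finally show ?thesis .
qed

lemma inner_Tb:
  assumes k: "k \<ge> 0" and l0: "l \<in> {-N..N}"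
  shows "(\<Sum>p\<in>{-N..N}. tau k l p * Om k N u p) = (\<Sum>j\<in>{-N..N}. u j * Kf k l j)"
proof -
  have l: "\<bar>l\<bar> \<le> N" using l0 by auto
  have "(\<Sum>p\<in>{-N..N}. tau k l p * Om k N u p) = (\<Sum>p\<in>{-N..N}. \<Sum>j\<in>{-N..N}. u j * (tau k l p * mom k (p - j)))"
    unfolding Om_def sum_distrib_left
    by (intro sum.cong refl) (simp add: mom_swap[of k _ "_"] algebra_simps)
  also have "... = (\<Sum>j\<in>{-N..N}. \<Sum>p\<in>{-N..N}. u j * (tau k l p * mom k (p - j)))"
    by (rule sum.swap)
  also have "... = (\<Sum>j\<in>{-N..N}. u j * Kf k l j)"
    by (intro sum.cong refl) (simp add: sum_distrib_left[symmetric] Ksum[OF k l] Kf_def)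
  finally show ?thesis .
qed

lemma beta_Tb_right:
  assumes k: "k \<ge> 0"
  shows "beta k N u (Tb k N v) = (\<Sum>l\<in>{-N..N}. v l * (\<Sum>j\<in>{-N..N}. u j * Kf k l j))"
proof -
  have "beta k N u (Tb k N v) = (\<Sum>p\<in>{-N..N}. \<Sum>l\<in>{-N..N}. v l * (tau k l p * Om k N u p))"
    unfolding beta_def Tb_def sum_distrib_right by (simp add: mult.assoc)
  also have "... = (\<Sum>l\<in>{-N..N}. \<Sum>p\<in>{-N..N}. v l * (tau k l p * Om k N u p))"
    by (rule sum.swap)
  also have "... = (\<Sum>l\<in>{-N..N}. v l * (\<Sum>j\<in>{-N..N}. u j * Kf k l j))"
    by (intro sum.cong refl) (simp add: sum_distrib_left[symmetric] inner_Tb[OF k] del: atLeastAtMost_iff)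
  finally show ?thesis .
qed

lemma T_sym:
  assumes k: "k \<ge> 0"
  shows "beta k N (Tb k N u) v = beta k N u (Tb k N v)"
proof -
  have "beta k N (Tb k N u) v = (\<Sum>l\<in>{-N..N}. v l * (\<Sum>j\<in>{-N..N}. u j * Kf k j l))"
    by (simp add: beta_def Om_Tb[OF k])
  then show ?thesis by (simp add: beta_Tb_right[OF k] Kf_sym)
qed

lemma beta_sym: "beta k N u v = beta k N v u"
proof -
  have "beta k N u v = (\<Sum>l\<in>{-N..N}. \<Sum>j\<in>{-N..N}. v l * u j * mom k (j - l))"
    by (simp add: beta_def Om_def sum_distrib_left mult.assoc)
  also have "... = (\<Sum>j\<in>{-N..N}. \<Sum>l\<in>{-N..N}. v l * u j * mom k (j - l))"
    by (rule sum.swap)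
  also have "... = beta k N v u"
    unfolding beta_def Om_def sum_distrib_left
    apply (rule sum.cong, simp)
    apply (rule sum.cong, simp)
    apply (simp add: mom_swap[of k _ "_"])
    done
  finally show ?thesis .
qed

lemma beta_lin1: "beta k N (\<lambda>p. x * u p + y * u' p) v = x * beta k N u v + y * beta k N u' v"
  by (simp add: beta_def Om_def sum.distrib sum_distrib_left algebra_simps)

lemma beta_lin2: "beta k N u (\<lambda>p. x * v p + y * v' p) = x * beta k N u v + y * beta k N u v'"
  by (simp add: beta_def sum.distrib sum_distrib_left algebra_simps)

lemma beta_cong1: "(\<And>p. p \<in> {-N..N} \<Longrightarrow> u p = u' p) \<Longrightarrow> beta k N u v = beta k N u' v"
  by (simp add: beta_def Om_def)

lemma beta_cong2: "(\<And>p. p \<in> {-N..N} \<Longrightarrow> v p = v' p) \<Longrightarrow> beta k N u v = beta k N u v'"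
  by (simp add: beta_def)

lemma sg_refl: "sg (-j) p + sg j (-p) = (if p = -j then 1 else 0) - (if p = j then 1 else 0)"
proof (cases "0 < j")
  case True
  then show ?thesis unfolding sg_def by auto
next
  case False
  show ?thesis
  proof (cases "j < 0")
    case True
    then show ?thesis unfolding sg_def by auto
  next
    case False
    then have "j = 0" using \<open>\<not> 0 < j\<close> by simp
    then show ?thesis unfolding sg_def by auto
  qed
qed

lemma tau_refl: "tau k (-j) p = - tau k j (-p) - (if p = j then 2 * of_real k else 0)"
proof -
  have s: "sg (-j) p = (if p = -j then 1 else 0) - (if p = j then 1 else 0) - sg j (-p)"
    using sg_refl[of j p] by (simp add: eq_diff_eq)
  show ?thesis
    unfolding tau_def s
    by (cases "p = j"; cases "p = -j") (auto simp: algebra_simps)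
qed

lemma Tb_refl:
  assumes p: "p \<in> {-N..N}"
  shows "Tb k N (\<lambda>j. u (-j)) p = - Tb k N u (-p) - 2 * of_real k * u p"
proof -
  have "Tb k N (\<lambda>j. u (-j)) p = (\<Sum>j\<in>{-N..N}. u j * tau k (-j) p)"
    unfolding Tb_def
    by (rule sum.reindex_bij_witness[of _ uminus uminus]) auto
  also have "... = (\<Sum>j\<in>{-N..N}. - (u j * tau k j (-p)) - (if j = p then 2 * of_real k * u p else 0))"
    by (rule sum.cong) (auto simp: tau_refl algebra_simps)
  also have "... = - Tb k N u (-p) - 2 * of_real k * u p"
    using p by (simp add: sum_subtractf sum_negf Tb_def)
  finally show ?thesis .
qed

lemma Tb_lin: "Tb k N (\<lambda>j. u j + x * v j) p = Tb k N u p + x * Tb k N v p"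
  by (simp add: Tb_def sum.distrib sum_distrib_left algebra_simps)

lemma tau_supp: "tau k j p \<noteq> 0 \<Longrightarrow> \<bar>p\<bar> \<le> \<bar>j\<bar> \<and> even (j - p)"
  unfolding tau_def sg_def by (auto split: if_splits)

lemma tau_supp_top: "n \<ge> 1 \<Longrightarrow> tau k n p \<noteq> 0 \<Longrightarrow> p = n \<or> p \<in> W n"
  unfolding tau_def sg_def W_def by (auto split: if_splits)

lemma tau_supp_W: "j \<in> W n \<Longrightarrow> tau k j p \<noteq> 0 \<Longrightarrow> p \<in> W n"
  using tau_supp[of k j p] unfolding W_def by auto

lemma tau_diag: "n \<ge> 1 \<Longrightarrow> tau k n n = of_int n + of_real k"
  by (simp add: tau_def sg_def)


lemma Om_refl: "Om k N (\<lambda>j. u (-j)) l = Om k N u (-l)"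
proof -
  have "Om k N (\<lambda>j. u (-j)) l = (\<Sum>j\<in>{-N..N}. u j * mom k (-j - l))"
    unfolding Om_def
    by (rule sum.reindex_bij_witness[of _ uminus uminus]) auto
  also have "... = Om k N u (-l)"
    unfolding Om_def using mom_even[of k "j + l" for j]
    by (intro sum.cong refl) (metis diff_minus_eq_add minus_diff_eq minus_minus mom_even uminus_add_conv_diff)
  finally show ?thesis .
qed

lemma Om_lin: "Om k N (\<lambda>j. u j + x * v j) l = Om k N u l + x * Om k N v l"
  by (simp add: Om_def sum.distrib sum_distrib_left algebra_simps)

lemma beta_zero_right:
  assumes "\<And>l. l \<in> {-N..N} \<Longrightarrow> v l * Om k N u l = 0"
  shows "beta k N u v = 0"
  unfolding beta_def by (rule sum.neutral) (use assms in auto)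

lemma beta_single:
  assumes "n \<in> {-N..N}" "\<And>l. l \<in> {-N..N} \<Longrightarrow> l \<noteq> n \<Longrightarrow> v l * Om k N u l = 0"
  shows "beta k N u v = v n * Om k N u n"
proof -
  have "beta k N u v = (\<Sum>l\<in>{-N..N}. if l = n then v n * Om k N u n else 0)"
    unfolding beta_def using assms(2) by (intro sum.cong refl) auto
  then show ?thesis using assms(1) by simp
qed

theorem mainTheorem3:
  fixes k :: real and n :: int and x :: real
  assumes "k \<ge> 0" and "n \<ge> 1"
  shows "E k (-n) x = E k n (-x) + complex_of_real (k / (of_int n + k)) * E k n x"
proof -
  have k: "k \<ge> 0" and n: "n \<ge> 1" using assms by auto
  obtain c where hc: "HO_coeffs k n c" using HO_exists[OF k n] by blast
  have theN: "(THE c. HO_coeffs k n c) = c"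
    by (rule the_equality[of "HO_coeffs k n" c, OF hc]) (rule HO_unique[OF k _ hc])
  define B where "B = {-n..n}"
  have absn: "\<bar>n\<bar> = n" "\<bar>-n\<bar> = n" using n by auto
  have finB: "finite B" by (simp add: B_def)
  have nB: "n \<in> B" "-n \<in> B" using n by (auto simp: B_def)
  have WB: "W n \<subseteq> B" using W_sub by (simp add: B_def)
  have supp: "\<And>j. j \<notin> W n \<Longrightarrow> c j = 0"
    using hc HO_iff[OF k] Low_pos[OF n] by auto
  define C where "C = c(n := 1)"
  have orthC: "\<And>l. l \<in> W n \<Longrightarrow> Om k n C l = 0"
    using hc HO_iff[OF k] Low_pos[OF n] absn by (auto simp: Om_def C_def)
  have Csupp: "\<And>j. j \<notin> W n \<Longrightarrow> j \<noteq> n \<Longrightarrow> C j = 0"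
    using supp by (simp add: C_def)
  have Cn: "C n = 1" by (simp add: C_def)
  have Cmn: "C (-n) = 0" using Csupp n_notin_W n by auto
  define a where "a = complex_of_real (k / (of_int n + k))"
  define nt where "nt = complex_of_int n + complex_of_real k"
  have ntpos: "of_int n + k > 0" using n k by simp
  have ntr: "nt = complex_of_real (of_int n + k)" by (simp add: nt_def)
  have nt0: "nt \<noteq> 0"
    unfolding ntr using ntpos by (metis of_real_eq_0_iff less_irrefl)
  have ant: "a * nt = of_real k"
  proof -
    have "a * nt = complex_of_real (k / (of_int n + k) * (of_int n + k))" by (simp only: a_def ntr of_real_mult)
    also have "... = of_real k" using ntpos by simp
    finally show ?thesis .
  qed
  define F where "F j = C (-j) + a * C j" for j
  have orthF: "\<And>l. l \<in> W n \<Longrightarrow> Om k n F l = 0"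
  proof -
    fix l assume l: "l \<in> W n"
    have "Om k n F l = Om k n (\<lambda>j. C (-j)) l + a * Om k n C l"
      unfolding F_def by (rule Om_lin)
    also have "... = Om k n C (-l) + a * Om k n C l" by (simp add: Om_refl)
    also have "... = 0" using orthC l W_neg by simp
    finally show "Om k n F l = 0" .
  qed
  define w where "w p = Tb k n C p - nt * C p" for p
  have wsupp: "\<And>p. p \<notin> W n \<Longrightarrow> w p = 0"
  proof -
    fix p assume p: "p \<notin> W n"
    have "Tb k n C p = (\<Sum>j\<in>B. if j = n then tau k n p else 0)"
      unfolding Tb_def B_def[symmetric]
    proof (intro sum.cong refl)
      fix j assume "j \<in> B"
      show "C j * tau k j p = (if j = n then tau k n p else 0)"
      proof (cases "j = n")
        case True then show ?thesis by (simp add: Cn)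
      next
        case False
        show ?thesis
        proof (cases "j \<in> W n")
          case True
          then have "tau k j p = 0" using tau_supp_W[of j n k p] p by blast
          then show ?thesis using False by simp
        next
          case False
          then show ?thesis using Csupp \<open>j \<noteq> n\<close> by simp
        qed
      qed
    qed
    also have "... = tau k n p" using nB unfolding B_def by simp
    finally have T: "Tb k n C p = tau k n p" .
    show "w p = 0"
    proof (cases "p = n")
      case True
      then show ?thesis using T tau_diag[OF n] Cn by (simp add: w_def nt_def)
    next
      case False
      then have "tau k n p = 0" using tau_supp_top[OF n, of k p] p by blast
      then show ?thesis using T Csupp[OF p False] by (simp add: w_def)
    qed
  qed
  have betaFC: "beta k n F C = Om k n F n"
  proof -
    have "beta k n F C = C n * Om k n F n"
    proof (rule beta_single)
      show "n \<in> {-n..n}" using nB by (simp add: B_def)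
      fix l assume "l \<in> {-n..n}" "l \<noteq> n"
      then show "C l * Om k n F l = 0" using Csupp orthF by (cases "l \<in> W n") auto
    qed
    then show ?thesis by (simp add: Cn)
  qed
  have beta_W_C: "beta k n y C = 0" if ys: "\<And>p. p \<notin> W n \<Longrightarrow> y p = 0" for y
  proof -
    have "beta k n y C = beta k n C y" by (rule beta_sym)
    also have "... = 0"
      by (rule beta_zero_right) (use ys orthC in \<open>metis mult_eq_0_iff\<close>)
    finally show ?thesis .
  qed
  have beta_F_W: "beta k n F y = 0" if ys: "\<And>p. p \<notin> W n \<Longrightarrow> y p = 0" for y
    by (rule beta_zero_right) (use ys orthF in \<open>metis mult_eq_0_iff\<close>)
  have e1: "beta k n F (Tb k n C) = nt * beta k n F C"
  proof -
    have "beta k n F (Tb k n C) = beta k n F (\<lambda>p. nt * C p + 1 * w p)"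
      by (rule beta_cong2) (simp add: w_def)
    also have "... = nt * beta k n F C + 1 * beta k n F w" by (rule beta_lin2)
    also have "beta k n F w = 0" by (rule beta_F_W) (rule wsupp)
    finally show ?thesis by simp
  qed
  define y where "y p = a * w p - w (-p)" for p
  have ysupp: "\<And>p. p \<notin> W n \<Longrightarrow> y p = 0"
    using wsupp W_neg by (fastforce simp: y_def)
  have TF: "Tb k n F p = (- nt) * F p + 1 * y p" if p: "p \<in> {-n..n}" for p
  proof -
    have "Tb k n F p = Tb k n (\<lambda>j. C (-j)) p + a * Tb k n C p"
      unfolding F_def by (rule Tb_lin)
    also have "... = - Tb k n C (-p) - 2 * of_real k * C p + a * Tb k n C p"
      using Tb_refl[OF p] by simp
    also have "... = - (nt * C (-p) + w (-p)) - 2 * of_real k * C p + a * (nt * C p + w p)"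
      by (simp add: w_def)
    also have "... = - nt * C (-p) - (2 * of_real k - a * nt) * C p + y p"
      by (simp add: y_def algebra_simps)
    also have "... = (- nt) * F p + 1 * y p"
      using ant by (simp add: F_def algebra_simps)
    finally show ?thesis .
  qed
  have e2: "beta k n (Tb k n F) C = - nt * beta k n F C"
  proof -
    have "beta k n (Tb k n F) C = beta k n (\<lambda>p. (- nt) * F p + 1 * y p) C"
      by (rule beta_cong1) (rule TF)
    also have "... = (- nt) * beta k n F C + 1 * beta k n y C" by (rule beta_lin1)
    also have "beta k n y C = 0" by (rule beta_W_C) (rule ysupp)
    finally show ?thesis by simp
  qed
  have "nt * beta k n F C = - nt * beta k n F C"
    using e1 e2 T_sym[OF k, of n F C] by simp
  then have "beta k n F C = 0" using nt0 by simp
  then have orthFn: "Om k n F n = 0" using betaFC by simp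
  define c' where "c' j = (if j \<in> insert n (W n) then F j else 0)" for j
  have c'F: "(c'(-n := 1)) j = F j" if "j \<in> B" for j
  proof (cases "j = -n")
    case True
    then show ?thesis using Cn Cmn by (simp add: F_def)
  next
    case False
    show ?thesis
    proof (cases "j \<in> insert n (W n)")
      case True
      then show ?thesis using False by (simp add: c'_def)
    next
      case nin: False
      have "C j = 0" using Csupp nin by auto
      moreover have "C (-j) = 0" using Csupp nin False W_neg by (metis insertCI minus_minus)
      ultimately show ?thesis using False nin by (simp add: c'_def F_def)
    qed
  qed
  have hc': "HO_coeffs k (-n) c'"
  proof -
    have "\<forall>j. j \<notin> Low (-n) \<longrightarrow> c' j = 0"
      using Low_neg[OF n] by (simp add: c'_def)
    moreover have "\<forall>l\<in>Low (-n). (\<Sum>j\<in>{-\<bar>-n\<bar>..\<bar>-n\<bar>}. (c'(-n := 1)) j * mom k (j - l)) = 0"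
    proof
      fix l assume l: "l \<in> Low (-n)"
      have "(\<Sum>j\<in>{-\<bar>-n\<bar>..\<bar>-n\<bar>}. (c'(-n := 1)) j * mom k (j - l)) = Om k n F l"
        unfolding Om_def absn B_def[symmetric] by (intro sum.cong refl) (metis c'F)
      also have "... = 0" using l Low_neg[OF n] orthF orthFn by auto
      finally show "(\<Sum>j\<in>{-\<bar>-n\<bar>..\<bar>-n\<bar>}. (c'(-n := 1)) j * mom k (j - l)) = 0" .
    qed
    ultimately show ?thesis using HO_iff[OF k] by blast
  qed
  have theNeg: "(THE c. HO_coeffs k (-n) c) = c'"
    by (rule the_equality[of "HO_coeffs k (-n)" c', OF hc']) (rule HO_unique[OF k _ hc'])
  have En: "E k n y = (\<Sum>j\<in>B. C j * exp (of_int j * of_real y))" for y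
    unfolding E_def theN C_def
    by (rule expoly_sum) (use finB WB nB Low_pos[OF n] supp in auto)
  have Emn: "E k (-n) x = (\<Sum>j\<in>B. F j * exp (of_int j * of_real x))"
  proof -
    have "E k (-n) x = (\<Sum>j\<in>B. (c'(-n := 1)) j * exp (of_int j * of_real x))"
      unfolding E_def theNeg
      by (rule expoly_sum) (use finB WB nB Low_neg[OF n] in \<open>auto simp: c'_def\<close>)
    also have "... = (\<Sum>j\<in>B. F j * exp (of_int j * of_real x))"
      by (intro sum.cong refl) (metis c'F)
    finally show ?thesis .
  qed
  have refl_sum: "(\<Sum>j\<in>B. C (-j) * exp (of_int j * of_real x)) = (\<Sum>j\<in>B. C j * exp (of_int j * of_real (-x)))"
    unfolding B_def
    by (rule sum.reindex_bij_witness[of _ uminus uminus]) auto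
  have "E k (-n) x = (\<Sum>j\<in>B. C (-j) * exp (of_int j * of_real x)) + a * (\<Sum>j\<in>B. C j * exp (of_int j * of_real x))"
    unfolding Emn F_def by (simp add: sum.distrib sum_distrib_left algebra_simps)
  also have "... = E k n (-x) + a * E k n x"
    unfolding refl_sum En ..
  finally show ?thesis by (simp add: a_def)
qed

end
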